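(* Let $\boldsymbol{R}=[r_{ij}]\in\mathbb{C}^{N\times N}$ be Hermitian. Define $\delta_1=0$ and $\delta_k=\sum_{i=1}^{k-1}|r_{ki}|$ for $k=2,\ldots,N$; define $a_k=2\delta_k+4\sum_{i=1}^{N-k}\delta_{k+i}$ for $k=1,\ldots,N-1$ and $a_N=2\delta_N$; and let $\overline{\boldsymbol{R}}=\boldsymbol{R}-\mathrm{Diag}(\boldsymbol{R})+\mathrm{diag}(a_1,\ldots,a_N)$. Let $\boldsymbol{g}\in\Omega^N$ be the output of the greedy method: $\boldsymbol{g}(1)=1$ and, for $k=1,\ldots,N-1$, $\boldsymbol{g}(k+1)$ is a maximizer over $x\in\Omega$ of $[\boldsymbol{g}(1),\ldots,\boldsymbol{g}(k),x]^H\boldsymbol{R}_{k+1}[\boldsymbol{g}(1),\ldots,\boldsymbol{g}(k),x]$. If $\mathrm{Tr}(\overline{\boldsymbol{R}})\le\mathrm{Tr}(\boldsymbol{R})$, then \[ \boldsymbol{g}^H\boldsymbol{R}\boldsymbol{g}\ \ge\ \Big(1-\frac{1}{e}\Big)\max_{\boldsymbol{s}\in\Omega^N}\boldsymbol{s}^H\boldsymbol{R}\boldsymbol{s}. \]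
   Context: $\Omega=\{x\in\mathbb{C}:|x|=1\}$. $\boldsymbol{R}_m$ denotes the principal submatrix of $\boldsymbol{R}$ formed by its first $m$ rows and first $m$ columns, and $[c_1,\ldots,c_m]$ denotes the column vector with entries $c_1,\ldots,c_m$. $\mathrm{Diag}(\boldsymbol{R})$ is the diagonal matrix with the diagonal of $\boldsymbol{R}$; $\mathrm{diag}(a_1,\ldots,a_N)$ is the diagonal matrix with entries $a_1,\ldots,a_N$. $\mathrm{Tr}$ denotes the trace. Empty sums are zero. *)

theory Defs
  imports Complex_Main
begin

text \<open>Matrices in C^{N x N} are functions nat => nat => complex, indices 1..N;
vectors in C^N are functions nat => complex, indices 1..N.\<close>

definition hermitian :: "nat \<Rightarrow> (nat \<Rightarrow> nat \<Rightarrow> complex) \<Rightarrow> bool" where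
  "hermitian N R \<longleftrightarrow> (\<forall>i\<in>{1..N}. \<forall>j\<in>{1..N}. R i j = cnj (R j i))"

text \<open>s^H R_m s, using the leading m x m principal submatrix and the first m entries of s.\<close>
definition qform :: "nat \<Rightarrow> (nat \<Rightarrow> nat \<Rightarrow> complex) \<Rightarrow> (nat \<Rightarrow> complex) \<Rightarrow> complex" where
  "qform m R s = (\<Sum>i=1..m. \<Sum>j=1..m. cnj (s i) * R i j * s j)"

definition unimod_vec :: "nat \<Rightarrow> (nat \<Rightarrow> complex) \<Rightarrow> bool" where
  "unimod_vec N s \<longleftrightarrow> (\<forall>i\<in>{1..N}. cmod (s i) = 1)"

definition mtrace :: "nat \<Rightarrow> (nat \<Rightarrow> nat \<Rightarrow> complex) \<Rightarrow> complex" where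
  "mtrace N R = (\<Sum>k=1..N. R k k)"

definition delta :: "(nat \<Rightarrow> nat \<Rightarrow> complex) \<Rightarrow> nat \<Rightarrow> real" where
  "delta R k = (if k = 1 then 0 else (\<Sum>i=1..k-1. cmod (R k i)))"

definition acoef :: "nat \<Rightarrow> (nat \<Rightarrow> nat \<Rightarrow> complex) \<Rightarrow> nat \<Rightarrow> real" where
  "acoef N R k = (if k < N then 2 * delta R k + 4 * (\<Sum>i=1..N-k. delta R (k+i))
                  else 2 * delta R N)"

definition Rbar :: "nat \<Rightarrow> (nat \<Rightarrow> nat \<Rightarrow> complex) \<Rightarrow> nat \<Rightarrow> nat \<Rightarrow> complex" where
  "Rbar N R i j = (if i = j then complex_of_real (acoef N R i) else R i j)"

definition greedy_output :: "nat \<Rightarrow> (nat \<Rightarrow> nat \<Rightarrow> complex) \<Rightarrow> (nat \<Rightarrow> complex) \<Rightarrow> bool" where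
  "greedy_output N R g \<longleftrightarrow> unimod_vec N g \<and> g 1 = 1 \<and>
     (\<forall>k\<in>{1..N-1}. \<forall>x. cmod x = 1 \<longrightarrow>
        Re (qform (k+1) R (g(k+1 := x))) \<le> Re (qform (k+1) R g))"

end

theory Submission
  imports Defs
begin

lemma qform_Suc:
  "qform (Suc m) R s = qform m R s + cnj (s (Suc m)) * R (Suc m) (Suc m) * s (Suc m)
     + cnj (s (Suc m)) * (\<Sum>i=1..m. R (Suc m) i * s i)
     + (\<Sum>i=1..m. cnj (s i) * R i (Suc m)) * s (Suc m)"
  unfolding qform_def
  by (simp add: sum.distrib sum_distrib_left sum_distrib_right algebra_simps)

lemma cross_re:
  assumes "\<forall>i\<in>{1..m}. R i (Suc m) = cnj (R (Suc m) i)"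
  shows "Re ((\<Sum>i=1..m. cnj (s i) * R i (Suc m)) * s (Suc m))
       = Re (cnj (s (Suc m)) * (\<Sum>i=1..m. R (Suc m) i * s i))"
proof -
  have "cnj (cnj (s (Suc m)) * (\<Sum>i=1..m. R (Suc m) i * s i))
       = s (Suc m) * (\<Sum>i=1..m. cnj (R (Suc m) i) * cnj (s i))" by simp
  also have "(\<Sum>i=1..m. cnj (R (Suc m) i) * cnj (s i)) = (\<Sum>i=1..m. cnj (s i) * R i (Suc m))"
    using assms by (intro sum.cong) auto
  also have "s (Suc m) * (\<Sum>i=1..m. cnj (s i) * R i (Suc m)) = (\<Sum>i=1..m. cnj (s i) * R i (Suc m)) * s (Suc m)"
    by (rule mult.commute)
  finally have h: "(\<Sum>i=1..m. cnj (s i) * R i (Suc m)) * s (Suc m)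
       = cnj (cnj (s (Suc m)) * (\<Sum>i=1..m. R (Suc m) i * s i))" by (rule sym)
  show ?thesis unfolding h by (simp only: cnj.sel(1))
qed

lemma qform_Suc_re:
  assumes "\<forall>i\<in>{1..m}. R i (Suc m) = cnj (R (Suc m) i)" and "cmod (s (Suc m)) = 1"
  shows "Re (qform (Suc m) R s) = Re (qform m R s) + Re (R (Suc m) (Suc m))
     + 2 * Re (cnj (s (Suc m)) * (\<Sum>i=1..m. R (Suc m) i * s i))"
proof -
  have "cnj (s (Suc m)) * R (Suc m) (Suc m) * s (Suc m) = R (Suc m) (Suc m) * (cnj (s (Suc m)) * s (Suc m))"
    by (simp add: algebra_simps)
  also have "cnj (s (Suc m)) * s (Suc m) = 1"
    using assms(2) by (metis complex_mod_mult_cnj complex_norm_square mult.commute norm_one of_real_1 power_one)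
  finally have "cnj (s (Suc m)) * R (Suc m) (Suc m) * s (Suc m) = R (Suc m) (Suc m)" by simp
  then have "qform (Suc m) R s = qform m R s + R (Suc m) (Suc m)
     + cnj (s (Suc m)) * (\<Sum>i=1..m. R (Suc m) i * s i)
     + (\<Sum>i=1..m. cnj (s i) * R i (Suc m)) * s (Suc m)" using qform_Suc[of m R s] by simp
  then have "Re (qform (Suc m) R s) = Re (qform m R s) + Re (R (Suc m) (Suc m))
     + Re (cnj (s (Suc m)) * (\<Sum>i=1..m. R (Suc m) i * s i))
     + Re ((\<Sum>i=1..m. cnj (s i) * R i (Suc m)) * s (Suc m))" by (simp only: plus_complex.sel)
  then show ?thesis using cross_re[OF assms(1), of s] by simp
qed

lemma herm_col:
  assumes "hermitian N R" "Suc m \<le> N"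
  shows "\<forall>i\<in>{1..m}. R i (Suc m) = cnj (R (Suc m) i)"
proof (intro ballI)
  fix i assume i: "i \<in> {1..m}"
  then have "i \<in> {1..N}" "Suc m \<in> {1..N}" using assms(2) by auto
  then show "R i (Suc m) = cnj (R (Suc m) i)" using assms(1) unfolding hermitian_def by blast
qed

lemma cross_bound:
  assumes "\<forall>i\<in>{1..m}. cmod (s i) = 1" "cmod (s (Suc m)) = 1"
  shows "Re (cnj (s (Suc m)) * (\<Sum>i=1..m. R (Suc m) i * s i)) \<le> delta R (Suc m)"
proof -
  have "Re (cnj (s (Suc m)) * (\<Sum>i=1..m. R (Suc m) i * s i))
      \<le> cmod (cnj (s (Suc m)) * (\<Sum>i=1..m. R (Suc m) i * s i))" by (rule complex_Re_le_cmod)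
  also have "\<dots> = cmod (\<Sum>i=1..m. R (Suc m) i * s i)" using assms(2) by (simp add: norm_mult)
  also have "\<dots> \<le> (\<Sum>i=1..m. cmod (R (Suc m) i * s i))" by (rule norm_sum)
  also have "\<dots> = (\<Sum>i=1..m. cmod (R (Suc m) i))"
    using assms(1) by (intro sum.cong) (auto simp: norm_mult)
  also have "\<dots> = delta R (Suc m)" unfolding delta_def by (cases m) auto
  finally show ?thesis .
qed

lemma upper:
  assumes "hermitian N R" "unimod_vec N s" "m \<le> N"
  shows "Re (qform m R s) \<le> (\<Sum>k=1..m. Re (R k k) + 2 * delta R k)"
  using assms(3)
proof (induction m)
  case 0 then show ?case by (simp add: qform_def)
next
  case (Suc m)
  have u: "\<forall>i\<in>{1..m}. cmod (s i) = 1" "cmod (s (Suc m)) = 1"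
    using assms(2) Suc.prems unfolding unimod_vec_def by auto
  have "Re (qform (Suc m) R s) = Re (qform m R s) + Re (R (Suc m) (Suc m))
     + 2 * Re (cnj (s (Suc m)) * (\<Sum>i=1..m. R (Suc m) i * s i))"
    by (rule qform_Suc_re[of m R s, OF herm_col[OF assms(1) Suc.prems] u(2)])
  with Suc cross_bound[OF u, of R] show ?case by simp
qed

lemma lower:
  assumes "hermitian N R" "greedy_output N R g" "m \<le> N"
  shows "Re (qform m R g) \<ge> (\<Sum>k=1..m. Re (R k k))"
  using assms(3)
proof (induction m)
  case 0 then show ?case by (simp add: qform_def)
next
  case (Suc m)
  have gu: "unimod_vec N g" and g1: "g 1 = 1" and gr: "\<forall>k\<in>{1..N-1}. \<forall>x. cmod x = 1 \<longrightarrow>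
        Re (qform (k+1) R (g(k+1 := x))) \<le> Re (qform (k+1) R g)"
    using assms(2) unfolding greedy_output_def by auto
  have u: "cmod (g (Suc m)) = 1" using gu Suc.prems unfolding unimod_vec_def by auto
  have hc: "\<forall>i\<in>{1..m}. R i (Suc m) = cnj (R (Suc m) i)" by (rule herm_col[OF assms(1) Suc.prems])
  define c where "c = (\<Sum>i=1..m. R (Suc m) i * g i)"
  have e1: "Re (qform (Suc m) R g) = Re (qform m R g) + Re (R (Suc m) (Suc m))
     + 2 * Re (cnj (g (Suc m)) * c)"
    unfolding c_def by (rule qform_Suc_re[of m R g, OF hc u])
  have nn: "Re (cnj (g (Suc m)) * c) \<ge> 0"
  proof (cases m)
    case 0 then show ?thesis by (simp add: c_def)
  next
    case (Suc m')
    define h where "h = g(Suc m := - g (Suc m))"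
    have hu: "cmod (h (Suc m)) = 1" using u by (simp add: h_def)
    have A: "Re (qform (Suc m) R h) \<le> Re (qform (Suc m) R g)"
      using gr Suc.prems Suc u unfolding h_def by (auto)
    have qm: "qform m R h = qform m R g" unfolding qform_def h_def
      by (intro sum.cong refl) auto
    have ch: "(\<Sum>i=1..m. R (Suc m) i * h i) = c" unfolding c_def h_def
      by (intro sum.cong refl) auto
    have E2: "Re (qform (Suc m) R h) = Re (qform m R g) + Re (R (Suc m) (Suc m))
     + 2 * Re (cnj (h (Suc m)) * c)"
      using qform_Suc_re[of m R h, OF hc hu] unfolding qm ch .
    have neg: "Re (cnj (h (Suc m)) * c) = - Re (cnj (g (Suc m)) * c)"
      by (simp add: h_def)
    show ?thesis using A E2 neg e1 by linarith
  qed
  show ?case using Suc e1 nn by simp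
qed

lemma acoef_lb:
  assumes "k \<le> N" shows "acoef N R k \<ge> 2 * delta R k + (if k < N then 4 * delta R (Suc k) else 0)"
proof -
  have dnn: "\<And>j. delta R j \<ge> 0" unfolding delta_def by (auto intro: sum_nonneg)
  have le: "k < N \<Longrightarrow> delta R (Suc k) \<le> (\<Sum>i=1..N-k. delta R (k+i))"
  proof -
    assume kN: "k < N"
    have "(\<lambda>i. delta R (k+i)) 1 \<le> (\<Sum>i=1..N-k. delta R (k+i))"
      by (rule member_le_sum) (use kN dnn in auto)
    then show ?thesis by simp
  qed
  show ?thesis
  proof (cases "k < N")
    case True
    then have "acoef N R k = 2 * delta R k + 4 * (\<Sum>i=1..N-k. delta R (k+i))"
      unfolding acoef_def by simp
    with True le show ?thesis by simp
  next
    case False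
    then have "k = N" using assms by simp
    have "acoef N R k = 2 * delta R N" unfolding acoef_def using False by simp
    then show ?thesis using False \<open>k = N\<close> by simp
  qed
qed

theorem theorem1:
  fixes N :: nat and R :: "nat \<Rightarrow> nat \<Rightarrow> complex" and g :: "nat \<Rightarrow> complex"
  assumes "N \<ge> 1"
    and "hermitian N R"
    and "greedy_output N R g"
    and "Re (mtrace N (Rbar N R)) \<le> Re (mtrace N R)"
  shows "Re (qform N R g) \<ge> (1 - 1 / exp 1) * (SUP s \<in> {s. unimod_vec N s \<and> (\<forall>i. i \<notin> {1..N} \<longrightarrow> s i = 0)}. Re (qform N R s))"
proof -
  define T where "T = (\<Sum>k=1..N. Re (R k k))"
  define D where "D = (\<Sum>k=1..N. delta R k)"
  have dnn: "\<And>j. delta R j \<ge> 0" unfolding delta_def by (auto intro: sum_nonneg)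
  have D0: "D \<ge> 0" unfolding D_def using dnn by (auto intro: sum_nonneg)
  have tr: "Re (mtrace N (Rbar N R)) = (\<Sum>k=1..N. acoef N R k)"
    unfolding mtrace_def Rbar_def by simp
  have "(\<Sum>k=1..N. acoef N R k) \<ge> (\<Sum>k=1..N. 2 * delta R k + (if k < N then 4 * delta R (Suc k) else 0))"
    by (intro sum_mono acoef_lb) auto
  also have "(\<Sum>k=1..N. 2 * delta R k + (if k < N then 4 * delta R (Suc k) else 0))
     = 2 * D + 4 * (\<Sum>k=1..N. (if k < N then delta R (Suc k) else 0))"
  proof -
    have "(\<Sum>k=1..N. 2 * delta R k + (if k < N then 4 * delta R (Suc k) else 0))
       = (\<Sum>k=1..N. 2 * delta R k + 4 * (if k < N then delta R (Suc k) else 0))"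
      by (intro sum.cong) auto
    also have "\<dots> = (\<Sum>k=1..N. 2 * delta R k) + (\<Sum>k=1..N. 4 * (if k < N then delta R (Suc k) else 0))"
      by (rule sum.distrib)
    also have "\<dots> = 2 * D + 4 * (\<Sum>k=1..N. (if k < N then delta R (Suc k) else 0))"
      unfolding D_def by (simp only: sum_distrib_left[symmetric])
    finally show ?thesis .
  qed
  also have "(\<Sum>k=1..N. (if k < N then delta R (Suc k) else 0)) = D"
  proof -
    obtain M where NM: "N = Suc M" using assms(1) by (cases N) auto
    have "(\<Sum>k=1..N. (if k < N then delta R (Suc k) else 0))
        = (\<Sum>k=1..M. (if k < N then delta R (Suc k) else 0))" unfolding NM by simp
    also have "\<dots> = (\<Sum>k=1..M. delta R (Suc k))" unfolding NM by (intro sum.cong) auto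
    also have "\<dots> = (\<Sum>k=Suc 1..Suc M. delta R k)" by (rule sum.shift_bounds_cl_Suc_ivl[symmetric])
    also have "\<dots> = delta R 1 + (\<Sum>k=Suc 1..Suc M. delta R k)" by (simp add: delta_def)
    also have "\<dots> = D" unfolding D_def NM by (rule sum.atLeast_Suc_atMost[symmetric]) simp
    finally show ?thesis .
  qed
  finally have "(\<Sum>k=1..N. acoef N R k) \<ge> 6 * D" by simp
  moreover have "Re (mtrace N R) = T" unfolding mtrace_def T_def by simp
  ultimately have T6: "T \<ge> 6 * D" using assms(4) tr by linarith
  let ?S = "{s. unimod_vec N s \<and> (\<forall>i. i \<notin> {1..N} \<longrightarrow> s i = 0)}"
  have ne: "(\<lambda>i. if i \<in> {1..N} then 1 else 0) \<in> ?S"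
    unfolding unimod_vec_def by auto
  have sup: "(SUP s \<in> ?S. Re (qform N R s)) \<le> T + 2 * D"
  proof (rule cSUP_least)
    show "?S \<noteq> {}" using ne by blast
  next
    fix s assume "s \<in> ?S"
    then have "Re (qform N R s) \<le> (\<Sum>k=1..N. Re (R k k) + 2 * delta R k)"
      using upper[OF assms(2)] by auto
    then show "Re (qform N R s) \<le> T + 2 * D"
      unfolding T_def D_def by (simp add: sum.distrib sum_distrib_left)
  qed
  have low: "Re (qform N R g) \<ge> T" unfolding T_def using lower[OF assms(2,3)] by simp
  have e1: "exp (1::real) > 1" by simp
  have e3: "exp (1::real) \<le> 3" by (rule exp_le)
  have c0: "1 - 1 / exp (1::real) \<ge> 0" using e1 by (simp add: field_simps)
  have "(1 - 1 / exp 1) * (SUP s \<in> ?S. Re (qform N R s)) \<le> (1 - 1 / exp 1) * (T + 2 * D)"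
    using sup c0 by (rule mult_left_mono)
  also have "\<dots> \<le> T"
  proof -
    have "(exp 1 - 1) * (T + 2 * D) \<le> exp 1 * T"
    proof -
      have "(exp 1 - 1) * (2 * D) \<le> 4 * D" using mult_right_mono[of "exp 1 - 1" 2 "2*D"] e3 D0 by simp
      also have "\<dots> \<le> T" using T6 D0 by linarith
      finally show ?thesis by (simp add: algebra_simps)
    qed
    then show ?thesis using e1 by (simp add: field_simps)
  qed
  finally show ?thesis using low by linarith
qed

end
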